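(* Let $1\le k\le m<2n$. Under the shuffle representation, the image of $v[k,m]$ is $$v[k,m]=\alpha_k^m\cdot(x_mx_{m-1}\cdots x_{k+1}x_k),\qquad \alpha_k^m=\varepsilon_k^m(q-1)^{m-k}\prod_{k\le i<j\le m}p_{ij},$$ where $\varepsilon_k^m=1+q$ if $k\le n\le m$ and $m\ne\phi(k)$; $\varepsilon_k^m=1+q^{-1}$ if $m=\phi(k)\ne n$; and $\varepsilon_k^m=1$ otherwise.
   Context: Let $\mathbf{k}$ be a field, $G$ an abelian group, $n\ge 2$, $X=\{x_1,\dots,x_n\}$. Fix $g_i\in G$, characters $\chi^i:G\to\mathbf{k}^*$, $p_{ij}=\chi^i(g_j)$; for words $u,v$, $g_u,\chi^u$ are obtained by replacing $x_i$ by $g_i$, resp. $\chi^i$, and $p(u,v)=\chi^u(g_v)$ (bimultiplicative). $G\langle X\rangle$: skew group algebra, $x_ig=\chi^i(g)gx_i$; skew bracket $[u,v]=uv-p(u,v)vu$. Fix $q\in\mathbf{k}^*$, $q^3\ne1$, $q\ne-1$; assume $p_{ii}=q$ ($i<n$), $p_{nn}=q^2$, $p_{i,i-1}p_{i-1,i}=q^{-1}$ ($1<i<n$), $p_{n-1,n}p_{n,n-1}=q^{-2}$, $p_{ij}p_{ji}=1$ ($j>i+1$). $U_q^+(\mathfrak{sp}_{2n})$ is the quotient of $G\langle X\rangle$ by the ideal generated by $[x_i,[x_i,x_{i+1}]]$, $[[x_i,x_{i+1}],x_{i+1}]$ ($1\le i<n-1$), $[x_i,x_j]$ ($j>i+1$),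 $[[x_{n-1},x_n],x_n]$, $[x_{n-1},[x_{n-1},[x_{n-1},x_n]]]$. For $n<i<2n$, $x_i:=x_{2n-i}$ (and $p_{ij}$ for such indices means $\chi$ of the corresponding generators, e.g. $p_{ij}=p_{2n-i,j}$ if $i>n\ge j$); $\phi(i)=2n-i$. $v(k,m)=x_k\cdots x_m$; $v[k,k]=x_k$; for $k<m$: $v[k,m]=[[\dots[x_k,x_{k+1}],\dots],x_m]$ if $m<\phi(k)$; $v[k,m]=[x_k,[x_{k+1},[\dots,[x_{m-1},x_m]\dots]]]$ if $m>\phi(k)$; $v[k,m]=v[k,m-1]x_m-q^{-1}p(v(k,m-1),x_m)x_mv[k,m-1]$ if $m=\phi(k)$. Shuffle representation: let $\mathrm{Sh}$ be the vector space with basis the comonomials $(z_1\cdots z_r)$, $z_i\in X$, $r\ge0$, with the braided shuffle product $(a_1\cdots a_r)(b_1\cdots b_s)=\sum_w c_w\,(w)$, the sum over all shuffles $w$ of the two sequences, where $c_w=\prod p(b,a)^{-1}$ over all pairs of a letter $a$ of the first factor and a letter $b$ of the second factor such that $b$ precedes $a$ in $w$. The map $x_i\mapsto(x_i)$ extends to an algebra homomorphism from the subalgebra of $U_q^+(\mathfrak{sp}_{2n})$ generated by $x_1,\dots,x_n$ into $\mathrm{Sh}$; "the image under the shuffle representation" refers to this homomorphism. *)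

theory Defs
  imports Main
begin

text \<open>Generators x_1..x_n are encoded by their indices 1..n; a word is a nat list.
  The structure constants p_ij = chi^i(g_j) are given by a function
  p :: nat => nat => 'a (only values on {1..n} x {1..n} matter).\<close>

text \<open>Index convention: x_i := x_(2n-i) for n < i < 2n.\<close>
definition gidx :: "nat \<Rightarrow> nat \<Rightarrow> nat" where
  "gidx n i = (if i \<le> n then i else 2*n - i)"

definition phi :: "nat \<Rightarrow> nat \<Rightarrow> nat" where
  "phi n i = 2*n - i"

definition pw :: "(nat \<Rightarrow> nat \<Rightarrow> 'a::field) \<Rightarrow> nat list \<Rightarrow> nat list \<Rightarrow> 'a" where
  "pw p u v = (\<Prod>i<length u. \<Prod>j<length v. p (u!i) (v!j))"

definition vword :: "nat \<Rightarrow> nat \<Rightarrow> nat \<Rightarrow> nat list" where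
  "vword n k m = map (gidx n) [k..<Suc m]"

text \<open>Elements of Sh are represented by their coefficient functions on comonomials
  (words); all elements considered are finitely supported.\<close>
type_synonym 'a sh = "nat list \<Rightarrow> 'a"

definition sh_mono :: "nat list \<Rightarrow> 'a::field sh" where
  "sh_mono w = (\<lambda>u. if u = w then 1 else 0)"

definition sh_smult :: "'a::field \<Rightarrow> 'a sh \<Rightarrow> 'a sh" where
  "sh_smult c f = (\<lambda>u. c * f u)"

definition sh_sub :: "'a::field sh \<Rightarrow> 'a sh \<Rightarrow> 'a sh" where
  "sh_sub f g = (\<lambda>u. f u - g u)"

text \<open>A shuffle of a (length r) and b (length s) is encoded by the set S of positions
  in {0..<r+s} occupied by the letters of a.  rank S i = number of positions of S before i.\<close>
definition rnk :: "nat set \<Rightarrow> nat \<Rightarrow> nat" where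
  "rnk S i = card {j\<in>S. j < i}"

definition shuffle_word :: "nat set \<Rightarrow> nat list \<Rightarrow> nat list \<Rightarrow> nat list" where
  "shuffle_word S a b =
     map (\<lambda>i. if i \<in> S then a ! rnk S i else b ! rnk ({0..<length a + length b} - S) i)
         [0..<length a + length b]"

definition shuffle_coeff :: "(nat \<Rightarrow> nat \<Rightarrow> 'a::field) \<Rightarrow> nat set \<Rightarrow> nat list \<Rightarrow> nat list \<Rightarrow> 'a" where
  "shuffle_coeff p S a b =
     (let T = {0..<length a + length b} - S in
      \<Prod>(i,j)\<in>{(i,j). i \<in> S \<and> j \<in> T \<and> j < i}.
         inverse (p (b ! rnk T j) (a ! rnk S i)))"

definition shuffle_sets :: "nat \<Rightarrow> nat \<Rightarrow> nat set set" where
  "shuffle_sets r s = {S. S \<subseteq> {0..<r+s} \<and> card S = r}"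

definition shuf_basis :: "(nat \<Rightarrow> nat \<Rightarrow> 'a::field) \<Rightarrow> nat list \<Rightarrow> nat list \<Rightarrow> 'a sh" where
  "shuf_basis p a b = (\<lambda>w. \<Sum>S\<in>{S\<in>shuffle_sets (length a) (length b). shuffle_word S a b = w}.
                            shuffle_coeff p S a b)"

definition sh_mult :: "(nat \<Rightarrow> nat \<Rightarrow> 'a::field) \<Rightarrow> 'a sh \<Rightarrow> 'a sh \<Rightarrow> 'a sh" where
  "sh_mult p f g = (\<lambda>w. \<Sum>u\<in>{u. f u \<noteq> 0}. \<Sum>v\<in>{v. g v \<noteq> 0}. f u * g v * shuf_basis p u v w)"

definition sh_br :: "(nat \<Rightarrow> nat \<Rightarrow> 'a::field) \<Rightarrow> nat list \<Rightarrow> 'a sh \<Rightarrow> nat list \<Rightarrow> 'a sh \<Rightarrow> 'a sh" where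
  "sh_br p u f v g = sh_sub (sh_mult p f g) (sh_smult (pw p u v) (sh_mult p g f))"

definition shx :: "nat \<Rightarrow> nat \<Rightarrow> 'a::field sh" where
  "shx n i = sh_mono [gidx n i]"

fun vleft :: "(nat \<Rightarrow> nat \<Rightarrow> 'a::field) \<Rightarrow> nat \<Rightarrow> nat \<Rightarrow> nat \<Rightarrow> 'a sh" where
  "vleft p n k 0 = shx n k"
| "vleft p n k (Suc d) =
     sh_br p (vword n k (k+d)) (vleft p n k d) [gidx n (k + Suc d)] (shx n (k + Suc d))"

fun vright :: "(nat \<Rightarrow> nat \<Rightarrow> 'a::field) \<Rightarrow> nat \<Rightarrow> nat \<Rightarrow> nat \<Rightarrow> 'a sh" where
  "vright p n m 0 = shx n m"
| "vright p n m (Suc d) =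
     sh_br p [gidx n (m - Suc d)] (shx n (m - Suc d)) (vword n (m - d) m) (vright p n m d)"

definition vbr :: "(nat \<Rightarrow> nat \<Rightarrow> 'a::field) \<Rightarrow> 'a \<Rightarrow> nat \<Rightarrow> nat \<Rightarrow> nat \<Rightarrow> 'a sh" where
  "vbr p q n k m =
    (if k = m then shx n k
     else if m < phi n k then vleft p n k (m - k)
     else if phi n k < m then vright p n m (m - k)
     else sh_sub (sh_mult p (vleft p n k (m - 1 - k)) (shx n m))
                 (sh_smult (inverse q * pw p (vword n k (m - 1)) [gidx n m])
                           (sh_mult p (shx n m) (vleft p n k (m - 1 - k)))))"

definition eps :: "'a::field \<Rightarrow> nat \<Rightarrow> nat \<Rightarrow> nat \<Rightarrow> 'a" where
  "eps q n k m =
    (if k \<le> n \<and> n \<le> m \<and> m \<noteq> phi n k then 1 + q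
     else if m = phi n k \<and> m \<noteq> n then 1 + inverse q
     else 1)"

definition alpha :: "(nat \<Rightarrow> nat \<Rightarrow> 'a::field) \<Rightarrow> 'a \<Rightarrow> nat \<Rightarrow> nat \<Rightarrow> nat \<Rightarrow> 'a" where
  "alpha p q n k m =
     eps q n k m * (q - 1) ^ (m - k) *
     (\<Prod>(i,j)\<in>{(i,j). k \<le> i \<and> i < j \<and> j \<le> m}. p (gidx n i) (gidx n j))"

end

theory Submission
  imports Defs
begin



definition ins :: "nat \<Rightarrow> nat \<Rightarrow> nat list \<Rightarrow> nat list" where
  "ins t a u = take t u @ a # drop t u"

lemma rnk_compl:
  assumes "i \<le> r" "i \<noteq> t" "t \<le> r"
  shows "rnk ({0..<Suc r} - {t}) i = (if i < t then i else i - 1)"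
proof (cases "i < t")
  case True
  hence "{j\<in>{0..<Suc r} - {t}. j < i} = {0..<i}" using assms by auto
  thus ?thesis using True by (simp add: rnk_def)
next
  case False
  hence "{j\<in>{0..<Suc r} - {t}. j < i} = {0..<i} - {t}" using assms by auto
  thus ?thesis using False assms by (simp add: rnk_def)
qed

lemma rnk_single: "rnk {t} t = 0"
  by (simp add: rnk_def)

lemma ins_nth:
  assumes "t \<le> length u" "i \<le> length u"
  shows "ins t a u ! i = (if i < t then u ! i else if i = t then a else u ! (i - 1))"
  using assms by (auto simp: ins_def nth_append min_def nth_Cons' )

lemma length_ins[simp]: "t \<le> length u \<Longrightarrow> length (ins t a u) = Suc (length u)"
  by (simp add: ins_def)

lemma shuffle_sets_r1:
  "shuffle_sets r 1 = (\<lambda>t. {0..<Suc r} - {t}) ` {..r}"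
proof (intro set_eqI iffI)
  fix S assume "S \<in> shuffle_sets r 1"
  hence S: "S \<subseteq> {0..<Suc r}" "card S = r" by (auto simp: shuffle_sets_def)
  hence "card ({0..<Suc r} - S) = 1" by (simp add: card_Diff_subset finite_subset)
  then obtain t where t: "{0..<Suc r} - S = {t}" by (rule card_1_singletonE)
  hence "t \<le> r" by auto
  moreover have "S = {0..<Suc r} - {t}" using S(1) t by blast
  ultimately show "S \<in> (\<lambda>t. {0..<Suc r} - {t}) ` {..r}" by auto
next
  fix S assume "S \<in> (\<lambda>t. {0..<Suc r} - {t}) ` {..r}"
  then obtain t where "t \<le> r" "S = {0..<Suc r} - {t}" by auto
  thus "S \<in> shuffle_sets r 1" by (auto simp: shuffle_sets_def)
qed

lemma shuffle_sets_1r: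
  "shuffle_sets 1 r = (\<lambda>t. {t}) ` {..r}"
proof (intro set_eqI iffI)
  fix S assume "S \<in> shuffle_sets 1 r"
  hence S: "S \<subseteq> {0..<Suc r}" "card S = 1" by (auto simp: shuffle_sets_def)
  then obtain t where t: "S = {t}" using card_1_singletonE by blast
  thus "S \<in> (\<lambda>t. {t}) ` {..r}" using S by auto
next
  fix S assume "S \<in> (\<lambda>t. {t}) ` {..r}"
  thus "S \<in> shuffle_sets 1 r" by (auto simp: shuffle_sets_def)
qed

lemma shuffle_word_r1:
  assumes "t \<le> length u"
  shows "shuffle_word ({0..<Suc (length u)} - {t}) u [a] = ins t a u"
proof (rule nth_equalityI)
  show "length (shuffle_word ({0..<Suc (length u)} - {t}) u [a]) = length (ins t a u)"
    using assms by (simp add: shuffle_word_def)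
next
  fix i assume "i < length (shuffle_word ({0..<Suc (length u)} - {t}) u [a])"
  hence i: "i \<le> length u" by (simp add: shuffle_word_def)
  have T: "{0..<length u + length [a]} - ({0..<Suc (length u)} - {t}) = {t}" using assms by auto
  show "shuffle_word ({0..<Suc (length u)} - {t}) u [a] ! i = ins t a u ! i"
    using i assms unfolding shuffle_word_def T
    by (simp add: nth_append ins_nth rnk_compl rnk_single del: upt_Suc)
qed

lemma shuffle_word_1r:
  assumes "t \<le> length u"
  shows "shuffle_word {t} [a] u = ins t a u"
proof (rule nth_equalityI)
  show "length (shuffle_word {t} [a] u) = length (ins t a u)"
    using assms by (simp add: shuffle_word_def)
next
  fix i assume "i < length (shuffle_word {t} [a] u)"
  hence i: "i \<le> length u" by (simp add: shuffle_word_def)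
  have T: "{0..<length [a] + length u} - {t} = {0..<Suc (length u)} - {t}" by simp
  show "shuffle_word {t} [a] u ! i = ins t a u ! i"
    using i assms unfolding shuffle_word_def T
    by (simp add: nth_append ins_nth rnk_compl rnk_single del: upt_Suc)
qed

lemma drop_map_nth: "drop t u = map ((!) u) [t..<length u]"
  by (rule nth_equalityI) auto

lemma take_map_nth: "t \<le> length u \<Longrightarrow> take t u = map ((!) u) [0..<t]"
  by (rule nth_equalityI) auto

lemma prod_drop: "prod_list (map f (drop t u)) = (\<Prod>i\<in>{t..<length u}. f (u ! i))"
  by (simp add: drop_map_nth prod.distinct_set_conv_list[symmetric] comp_def)

lemma prod_take: "t \<le> length u \<Longrightarrow> prod_list (map f (take t u)) = (\<Prod>i\<in>{0..<t}. f (u ! i))"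
  by (simp add: take_map_nth prod.distinct_set_conv_list[symmetric] comp_def)

lemma shuffle_coeff_r1:
  assumes "t \<le> length u"
  shows "shuffle_coeff p ({0..<Suc (length u)} - {t}) u [a] =
         prod_list (map (\<lambda>x. inverse (p a x)) (drop t u))"
proof -
  let ?S = "{0..<Suc (length u)} - {t}"
  have T: "{0..<length u + length [a]} - ?S = {t}" using assms by auto
  have P: "{(i,j). i \<in> ?S \<and> j \<in> {t} \<and> j < i} = (\<lambda>i. (i,t)) ` {t<..length u}" by auto
  have "shuffle_coeff p ?S u [a] = (\<Prod>i\<in>{t<..length u}. inverse (p a (u ! rnk ?S i)))"
    unfolding shuffle_coeff_def Let_def T P
    by (subst prod.reindex) (auto simp: inj_on_def rnk_single)
  also have "\<dots> = (\<Prod>i\<in>{t<..length u}. inverse (p a (u ! (i - 1))))"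
    by (rule prod.cong) (use assms in \<open>auto simp: rnk_compl\<close>)
  also have "\<dots> = (\<Prod>i\<in>Suc ` {t..<length u}. inverse (p a (u ! (i - 1))))"
  proof -
    have "{t<..length u} = Suc ` {t..<length u}"
      using image_Suc_atLeastLessThan[of t "length u"] by auto
    thus ?thesis by simp
  qed
  also have "\<dots> = (\<Prod>i\<in>{t..<length u}. inverse (p a (u ! i)))"
    by (subst prod.reindex) auto
  finally show ?thesis by (simp add: prod_drop)
qed

lemma shuffle_coeff_1r:
  assumes "t \<le> length u"
  shows "shuffle_coeff p {t} [a] u =
         prod_list (map (\<lambda>x. inverse (p x a)) (take t u))"
proof -
  let ?T = "{0..<Suc (length u)} - {t}"
  have T: "{0..<length [a] + length u} - {t} = ?T" by simp
  have P: "{(i,j). i \<in> {t} \<and> j \<in> ?T \<and> j < i} = (\<lambda>j. (t,j)) ` {0..<t}" using assms by auto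
  have "shuffle_coeff p {t} [a] u = (\<Prod>j\<in>{0..<t}. inverse (p (u ! rnk ?T j) a))"
    unfolding shuffle_coeff_def Let_def T P
    by (subst prod.reindex) (auto simp: inj_on_def rnk_single)
  also have "\<dots> = (\<Prod>j\<in>{0..<t}. inverse (p (u ! j) a))"
    by (rule prod.cong) (use assms in \<open>auto simp: rnk_compl\<close>)
  finally show ?thesis using assms by (simp add: prod_take)
qed

lemma filter_image: "{S \<in> f ` A. P S} = f ` {t\<in>A. P (f t)}" by auto

lemma shuf_basis_r1:
  "shuf_basis p u [a] w = (\<Sum>t\<in>{t. t \<le> length u \<and> ins t a u = w}.
       prod_list (map (\<lambda>x. inverse (p a x)) (drop t u)))"
proof -
  let ?f = "\<lambda>t. {0..<Suc (length u)} - {t}"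
  have inj: "inj_on ?f {..length u}"
  proof (rule inj_onI)
    fix x y assume xy: "x \<in> {..length u}" "y \<in> {..length u}" "?f x = ?f y"
    have "x \<notin> ?f x" by simp
    hence "x \<notin> ?f y" using xy(3) by simp
    thus "x = y" using xy(1) by auto
  qed
  have ss: "shuffle_sets (length u) (length [a]) = ?f ` {..length u}"
    using shuffle_sets_r1[of "length u"] by simp
  have e: "{t\<in>{..length u}. shuffle_word (?f t) u [a] = w} = {t. t \<le> length u \<and> ins t a u = w}"
    using shuffle_word_r1 by auto
  have "{S\<in>shuffle_sets (length u) (length [a]). shuffle_word S u [a] = w}
        = ?f ` {t. t \<le> length u \<and> ins t a u = w}"
    unfolding ss filter_image e ..
  hence "shuf_basis p u [a] w = (\<Sum>S\<in>?f ` {t. t \<le> length u \<and> ins t a u = w}. shuffle_coeff p S u [a])"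
    by (simp only: shuf_basis_def)
  also have "\<dots> = (\<Sum>t\<in>{t. t \<le> length u \<and> ins t a u = w}. shuffle_coeff p (?f t) u [a])"
    by (rule sum.reindex[unfolded comp_def]) (rule inj_on_subset[OF inj], auto)
  also have "\<dots> = (\<Sum>t\<in>{t. t \<le> length u \<and> ins t a u = w}. prod_list (map (\<lambda>x. inverse (p a x)) (drop t u)))"
    by (rule sum.cong) (auto simp: shuffle_coeff_r1)
  finally show ?thesis .
qed

lemma shuf_basis_1r:
  "shuf_basis p [a] u w = (\<Sum>t\<in>{t. t \<le> length u \<and> ins t a u = w}.
       prod_list (map (\<lambda>x. inverse (p x a)) (take t u)))"
proof -
  let ?f = "\<lambda>t. {t}::nat set"
  have ss: "shuffle_sets (length [a]) (length u) = ?f ` {..length u}"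
    using shuffle_sets_1r[of "length u"] by simp
  have e: "{t\<in>{..length u}. shuffle_word (?f t) [a] u = w} = {t. t \<le> length u \<and> ins t a u = w}"
    using shuffle_word_1r by auto
  have "{S\<in>shuffle_sets (length [a]) (length u). shuffle_word S [a] u = w}
        = ?f ` {t. t \<le> length u \<and> ins t a u = w}"
    unfolding ss filter_image e ..
  hence "shuf_basis p [a] u w = (\<Sum>S\<in>?f ` {t. t \<le> length u \<and> ins t a u = w}. shuffle_coeff p S [a] u)"
    by (simp only: shuf_basis_def)
  also have "\<dots> = (\<Sum>t\<in>{t. t \<le> length u \<and> ins t a u = w}. shuffle_coeff p (?f t) [a] u)"
    by (rule sum.reindex[unfolded comp_def]) (auto simp: inj_on_def)
  also have "\<dots> = (\<Sum>t\<in>{t. t \<le> length u \<and> ins t a u = w}. prod_list (map (\<lambda>x. inverse (p x a)) (take t u)))"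
    by (rule sum.cong) (auto simp: shuffle_coeff_1r)
  finally show ?thesis .
qed




lemma nz_set: "{x. c * sh_mono u x \<noteq> (0::'a::field)} = (if c = 0 then {} else {u})"
  by (auto simp: sh_mono_def)

lemma mult_smono:
  "sh_mult p (sh_smult c (sh_mono u)) (sh_smult d (sh_mono v)) = sh_smult (c*d) (shuf_basis p u v)"
  unfolding sh_mult_def sh_smult_def nz_set by (rule ext) (simp add: sh_mono_def)

lemma smono1: "sh_mono w = sh_smult 1 (sh_mono w)"
  by (simp add: sh_smult_def)

lemma br_left:
  "sh_sub (sh_mult p (sh_smult \<alpha> (sh_mono u)) (sh_mono [a]))
          (sh_smult c (sh_mult p (sh_mono [a]) (sh_smult \<alpha> (sh_mono u)))) =
   sh_smult \<alpha> (\<lambda>w. \<Sum>t\<in>{t. t \<le> length u \<and> ins t a u = w}.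
      prod_list (map (\<lambda>x. inverse (p a x)) (drop t u)) - c * prod_list (map (\<lambda>x. inverse (p x a)) (take t u)))"
  apply (subst (1 2) smono1[of "[a]"])
  apply (simp only: mult_smono)
  apply (rule ext)
  apply (simp add: sh_sub_def sh_smult_def shuf_basis_r1 shuf_basis_1r sum_subtractf sum_distrib_left algebra_simps)
  done

lemma br_right:
  "sh_sub (sh_mult p (sh_mono [b]) (sh_smult \<alpha> (sh_mono u)))
          (sh_smult c (sh_mult p (sh_smult \<alpha> (sh_mono u)) (sh_mono [b]))) =
   sh_smult \<alpha> (\<lambda>w. \<Sum>t\<in>{t. t \<le> length u \<and> ins t b u = w}.
      prod_list (map (\<lambda>x. inverse (p x b)) (take t u)) - c * prod_list (map (\<lambda>x. inverse (p b x)) (drop t u)))"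
  apply (subst (1 2) smono1[of "[b]"])
  apply (simp only: mult_smono)
  apply (rule ext)
  apply (simp add: sh_sub_def sh_smult_def shuf_basis_r1 shuf_basis_1r sum_subtractf sum_distrib_left algebra_simps)
  done

lemma collapse:
  fixes D :: "nat \<Rightarrow> 'a::field" and f :: "nat \<Rightarrow> nat list"
  assumes t0: "t0 \<le> r" and Z: "Z \<subseteq> {..r}" "t0 \<notin> Z"
    and zero: "\<And>t. t \<le> r \<Longrightarrow> t \<noteq> t0 \<Longrightarrow> t \<notin> Z \<Longrightarrow> D t = 0"
    and sumZ: "sum D Z = 0" and fZ: "\<And>t. t \<in> Z \<Longrightarrow> f t = ww" and ft0: "f t0 \<noteq> ww"
  shows "(\<lambda>w. \<Sum>t\<in>{t. t \<le> r \<and> f t = w}. D t) = sh_smult (D t0) (sh_mono (f t0))"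
proof (rule ext)
  fix w
  have fin: "finite {t. t \<le> r \<and> f t = w}" by simp
  have "(\<Sum>t\<in>{t. t \<le> r \<and> f t = w}. D t) = (\<Sum>t\<in>{t. t \<le> r \<and> f t = w} \<inter> insert t0 Z. D t)"
    by (rule sum.mono_neutral_right[OF fin]) (auto intro: zero)
  also have "\<dots> = sh_smult (D t0) (sh_mono (f t0)) w"
  proof (cases "w = f t0")
    case True
    hence "{t. t \<le> r \<and> f t = w} \<inter> insert t0 Z = {t0}" using t0 fZ ft0 by auto
    thus ?thesis using True by (simp add: sh_smult_def sh_mono_def)
  next
    case False
    show ?thesis
    proof (cases "w = ww")
      case True
      hence "{t. t \<le> r \<and> f t = w} \<inter> insert t0 Z = Z" using Z fZ ft0 by auto
      thus ?thesis using True False sumZ by (simp add: sh_smult_def sh_mono_def)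
    next
      case F2: False
      hence "{t. t \<le> r \<and> f t = w} \<inter> insert t0 Z = {}" using False fZ by auto
      thus ?thesis using False by (simp add: sh_smult_def sh_mono_def)
    qed
  qed
  finally show "(\<Sum>t\<in>{t. t \<le> r \<and> f t = w}. D t) = sh_smult (D t0) (sh_mono (f t0)) w" .
qed

lemma collapse0:
  fixes D :: "nat \<Rightarrow> 'a::field" and f :: "nat \<Rightarrow> nat list"
  assumes t0: "t0 \<le> r" and zero: "\<And>t. t \<le> r \<Longrightarrow> t \<noteq> t0 \<Longrightarrow> D t = 0"
  shows "(\<lambda>w. \<Sum>t\<in>{t. t \<le> r \<and> f t = w}. D t) = sh_smult (D t0) (sh_mono (f t0))"
  by (rule collapse[where Z="{}" and ww="f t0 @ [0]"]) (use assms in auto)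

lemma ins0: "ins 0 a u = a # u" by (simp add: ins_def)
lemma insr: "ins (length u) b u = u @ [b]" by (simp add: ins_def)
lemma ins_dup: "ins (length A) b (A @ b # C) = ins (Suc (length A)) b (A @ b # C)"
  by (simp add: ins_def)
lemma ins_hd: "1 \<le> t \<Longrightarrow> u \<noteq> [] \<Longrightarrow> hd (ins t a u) = hd u"
  by (cases u) (auto simp: ins_def take_Cons')
lemma ins_last: "t < length u \<Longrightarrow> last (ins t a u) = last u"
  by (auto simp: ins_def)

lemma collapseL:
  fixes D :: "nat \<Rightarrow> 'a::field"
  assumes u: "u = A @ a # C" and A: "A \<noteq> []" "hd A \<noteq> a"
    and zero: "\<And>t. t \<le> length u \<Longrightarrow> t \<noteq> 0 \<Longrightarrow> t \<noteq> length A \<Longrightarrow> t \<noteq> Suc (length A) \<Longrightarrow> D t = 0"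
    and sumZ: "D (length A) + D (Suc (length A)) = 0"
  shows "(\<lambda>w. \<Sum>t\<in>{t. t \<le> length u \<and> ins t a u = w}. D t) = sh_smult (D 0) (sh_mono (a # u))"
proof -
  have "(\<lambda>w. \<Sum>t\<in>{t. t \<le> length u \<and> ins t a u = w}. D t) = sh_smult (D 0) (sh_mono (ins 0 a u))"
  proof (rule collapse[where Z="{length A, Suc (length A)}" and ww="ins (length A) a u"])
    show "ins 0 a u \<noteq> ins (length A) a u"
    proof
      assume "ins 0 a u = ins (length A) a u"
      hence "hd (ins 0 a u) = hd (ins (length A) a u)" by simp
      also have "\<dots> = hd u" using A u by (intro ins_hd) (auto simp: Suc_le_eq)
      finally show False using A u by (simp add: ins0)
    qed
    show "sum D {length A, Suc (length A)} = 0" using sumZ by simp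
    show "\<And>t. t \<in> {length A, Suc (length A)} \<Longrightarrow> ins t a u = ins (length A) a u"
      using ins_dup[of A a C] u by auto
  qed (use u A zero in auto)
  thus ?thesis by (simp add: ins0)
qed

lemma collapseR:
  fixes D :: "nat \<Rightarrow> 'a::field"
  assumes u: "u = A @ b # C" and C: "C \<noteq> []" "last C \<noteq> b"
    and zero: "\<And>t. t \<le> length u \<Longrightarrow> t \<noteq> length u \<Longrightarrow> t \<noteq> length A \<Longrightarrow> t \<noteq> Suc (length A) \<Longrightarrow> D t = 0"
    and sumZ: "D (length A) + D (Suc (length A)) = 0"
  shows "(\<lambda>w. \<Sum>t\<in>{t. t \<le> length u \<and> ins t b u = w}. D t) = sh_smult (D (length u)) (sh_mono (u @ [b]))"
proof -
  have "(\<lambda>w. \<Sum>t\<in>{t. t \<le> length u \<and> ins t b u = w}. D t) = sh_smult (D (length u)) (sh_mono (ins (length u) b u))"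
  proof (rule collapse[where Z="{length A, Suc (length A)}" and ww="ins (length A) b u"])
    show "ins (length u) b u \<noteq> ins (length A) b u"
    proof
      assume "ins (length u) b u = ins (length A) b u"
      hence "last (ins (length u) b u) = last (ins (length A) b u)" by simp
      also have "\<dots> = last u" using C u by (intro ins_last) auto
      moreover have "last (ins (length u) b u) = b" by (simp add: insr)
      ultimately show False using C u by simp
    qed
    show "sum D {length A, Suc (length A)} = 0" using sumZ by simp
    show "\<And>t. t \<in> {length A, Suc (length A)} \<Longrightarrow> ins t b u = ins (length A) b u"
      using ins_dup[of A b C] u by auto
  qed (use u C zero in auto)
  thus ?thesis by (simp add: insr)
qed




definition plw :: "(nat \<Rightarrow> nat \<Rightarrow> 'a::field) \<Rightarrow> nat \<Rightarrow> nat list \<Rightarrow> 'a" where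
  "plw p a l = prod_list (map (\<lambda>x. p a x) l)"
definition prw :: "(nat \<Rightarrow> nat \<Rightarrow> 'a::field) \<Rightarrow> nat \<Rightarrow> nat list \<Rightarrow> 'a" where
  "prw p a l = prod_list (map (\<lambda>x. p x a) l)"
definition Ew :: "(nat \<Rightarrow> nat \<Rightarrow> 'a::field) \<Rightarrow> nat \<Rightarrow> nat list \<Rightarrow> 'a" where
  "Ew p a l = prod_list (map (\<lambda>x. p a x * p x a) l)"

lemma plw_simps[simp]: "plw p a [] = 1" "plw p a (x # l) = p a x * plw p a l"
  "plw p a (l1 @ l2) = plw p a l1 * plw p a l2"
  by (simp_all add: plw_def)
lemma prw_simps[simp]: "prw p a [] = 1" "prw p a (x # l) = p x a * prw p a l"
  "prw p a (l1 @ l2) = prw p a l1 * prw p a l2"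
  by (simp_all add: prw_def)
lemma Ew_simps[simp]: "Ew p a [] = 1" "Ew p a (x # l) = p a x * p x a * Ew p a l"
  "Ew p a (l1 @ l2) = Ew p a l1 * Ew p a l2"
  by (simp_all add: Ew_def)

lemma Ew_split: "Ew p a l = plw p a l * prw p a l"
  by (induction l) (simp_all add: ac_simps)

lemma prod_inv: "prod_list (map (\<lambda>x. inverse (f x)) l) = inverse (prod_list (map f l) :: 'a::field)"
  by (induction l) (simp_all add: inverse_mult_distrib)

lemma plw_nz: "\<forall>x\<in>set l. p a x \<noteq> 0 \<Longrightarrow> plw p a l \<noteq> 0"
  by (induction l) auto
lemma prw_nz: "\<forall>x\<in>set l. p x a \<noteq> 0 \<Longrightarrow> prw p a l \<noteq> 0"
  by (induction l) auto

definition Dl :: "(nat \<Rightarrow> nat \<Rightarrow> 'a::field) \<Rightarrow> 'a \<Rightarrow> nat \<Rightarrow> nat list \<Rightarrow> nat \<Rightarrow> 'a" where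
  "Dl p c0 a u t = prw p a (drop t u) * (inverse (Ew p a (drop t u)) - c0)"
definition Dr :: "(nat \<Rightarrow> nat \<Rightarrow> 'a::field) \<Rightarrow> 'a \<Rightarrow> nat \<Rightarrow> nat list \<Rightarrow> nat \<Rightarrow> 'a" where
  "Dr p c0 b u t = plw p b (take t u) * (inverse (Ew p b (take t u)) - c0)"

lemma Dl_eq:
  assumes nz: "\<forall>x\<in>set u. p a x \<noteq> 0 \<and> p x a \<noteq> 0"
  shows "prod_list (map (\<lambda>x. inverse (p a x)) (drop t u)) - (c0 * prw p a u) * prod_list (map (\<lambda>x. inverse (p x a)) (take t u))
         = Dl p c0 a u t"
proof -
  let ?T = "take t u" and ?D = "drop t u"
  have u: "prw p a u = prw p a ?T * prw p a ?D"
    by (metis append_take_drop_id prw_simps(3))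
  have n1: "prw p a ?T \<noteq> 0" using nz by (intro prw_nz) (meson in_set_takeD)
  have n2: "prw p a ?D \<noteq> 0" using nz by (intro prw_nz) (meson in_set_dropD)
  have n3: "plw p a ?D \<noteq> 0" using nz by (intro plw_nz) (meson in_set_dropD)
  show ?thesis
    unfolding Dl_def prod_inv u Ew_split
    using n1 n2 n3 by (simp add: prw_def[symmetric] plw_def[symmetric] field_simps)
qed

lemma Dr_eq:
  assumes nz: "\<forall>x\<in>set u. p b x \<noteq> 0 \<and> p x b \<noteq> 0"
  shows "prod_list (map (\<lambda>x. inverse (p x b)) (take t u)) - (c0 * plw p b u) * prod_list (map (\<lambda>x. inverse (p b x)) (drop t u))
         = Dr p c0 b u t"
proof -
  let ?T = "take t u" and ?D = "drop t u"
  have u: "plw p b u = plw p b ?T * plw p b ?D"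
    by (metis append_take_drop_id plw_simps(3))
  have n1: "prw p b ?T \<noteq> 0" using nz by (intro prw_nz) (meson in_set_takeD)
  have n2: "plw p b ?D \<noteq> 0" using nz by (intro plw_nz) (meson in_set_dropD)
  have n3: "plw p b ?T \<noteq> 0" using nz by (intro plw_nz) (meson in_set_takeD)
  show ?thesis
    unfolding Dr_def prod_inv u Ew_split
    using n1 n2 n3 by (simp add: prw_def[symmetric] plw_def[symmetric] field_simps)
qed

lemma pw_right1: "pw p U [a] = prw p a U"
  by (simp add: pw_def prw_def prod.list_conv_set_nth atLeast0LessThan)
lemma pw_left1: "pw p [b] U = plw p b U"
  by (simp add: pw_def plw_def prod.list_conv_set_nth atLeast0LessThan)
lemma prw_rev[simp]: "prw p a (rev l) = prw p a l"
  by (simp add: prw_def prod_list.rev rev_map[symmetric])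
lemma plw_rev[simp]: "plw p a (rev l) = plw p a l"
  by (simp add: plw_def prod_list.rev rev_map[symmetric])




lemma g_low: "i \<le> n \<Longrightarrow> gidx n i = i" by (simp add: gidx_def)
lemma g_high: "n < i \<Longrightarrow> gidx n i = 2*n - i" by (simp add: gidx_def)
lemma g_range: "c \<le> y \<Longrightarrow> y + c \<le> 2*n \<Longrightarrow> c \<le> gidx n y \<and> gidx n y \<le> n"
  by (auto simp: gidx_def)

lemma map_g_low: "j \<le> Suc n \<Longrightarrow> map (gidx n) [i..<j] = [i..<j]"
  by (rule map_idI) (auto simp: gidx_def)

lemma map_g_high_rev: "n < i \<Longrightarrow> i \<le> j \<Longrightarrow> j \<le> 2*n \<Longrightarrow>
   map (gidx n) (rev [i..<j]) = [2*n+1-j..<2*n+1-i]"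
proof (induction j rule: nat_induct)
  case 0 thus ?case by simp
next
  case (Suc j)
  show ?case
  proof (cases "i = Suc j")
    case True thus ?thesis by simp
  next
    case False
    hence ij: "i \<le> j" using Suc by simp
    have "map (gidx n) (rev [i..<Suc j]) = (2*n - j) # [2*n+1-j..<2*n+1-i]"
      using Suc ij by (simp add: g_high)
    also have "\<dots> = (2*n - j) # [Suc (2*n - j)..<2*n+1-i]"
      using Suc ij by (simp add: Suc_diff_le)
    also have "\<dots> = [2*n+1-Suc j..<2*n+1-i]"
      using Suc ij by (simp add: upt_conv_Cons)
    finally show ?thesis .
  qed
qed

lemma vword_set: "1 \<le> k \<Longrightarrow> m < 2*n \<Longrightarrow> x \<in> set (vword n k m) \<Longrightarrow> 1 \<le> x \<and> x \<le> n"
  unfolding vword_def using g_range[of 1 _ n] by auto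

locale SP =
  fixes p :: "nat \<Rightarrow> nat \<Rightarrow> 'a::field" and q :: 'a and n :: nat
  assumes n2: "n \<ge> 2"
    and pnz: "\<And>i j. 1 \<le> i \<Longrightarrow> i \<le> n \<Longrightarrow> 1 \<le> j \<Longrightarrow> j \<le> n \<Longrightarrow> p i j \<noteq> 0"
    and qnz: "q \<noteq> 0" and q3: "q ^ 3 \<noteq> 1" and qm1: "q \<noteq> -1"
    and pii: "\<And>i. 1 \<le> i \<Longrightarrow> i < n \<Longrightarrow> p i i = q"
    and pnn: "p n n = q ^ 2"
    and padj: "\<And>i. 1 < i \<Longrightarrow> i < n \<Longrightarrow> p i (i - 1) * p (i - 1) i = inverse q"
    and plast: "p (n - 1) n * p n (n - 1) = inverse (q ^ 2)"
    and pfar: "\<And>i j. 1 \<le> i \<Longrightarrow> i + 1 < j \<Longrightarrow> j \<le> n \<Longrightarrow> p i j * p j i = 1"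
begin

lemma q1: "q \<noteq> 1" using q3 by auto

lemma e_far: "1 \<le> a \<Longrightarrow> a \<le> n \<Longrightarrow> 1 \<le> x \<Longrightarrow> x \<le> n \<Longrightarrow> a + 1 < x \<or> x + 1 < a \<Longrightarrow> p a x * p x a = 1"
  using pfar[of a x] pfar[of x a] by (auto simp: mult.commute)

lemma e_adj1: "1 \<le> x \<Longrightarrow> a = x + 1 \<Longrightarrow> a < n \<Longrightarrow> p a x * p x a = inverse q"
  using padj[of a] by simp
lemma e_adj2: "1 \<le> a \<Longrightarrow> x = a + 1 \<Longrightarrow> x < n \<Longrightarrow> p a x * p x a = inverse q"
  using padj[of x] by (simp add: mult.commute)
lemma e_adjn1: "a = n \<Longrightarrow> x = n - 1 \<Longrightarrow> p a x * p x a = inverse (q^2)"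
  using plast by (simp add: mult.commute)
lemma e_adjn2: "a = n - 1 \<Longrightarrow> x = n \<Longrightarrow> p a x * p x a = inverse (q^2)"
  using plast by simp
lemma e_same: "1 \<le> a \<Longrightarrow> a < n \<Longrightarrow> p a a * p a a = q^2"
  using pii[of a] by (simp add: power2_eq_square)

lemma E_far: "1 \<le> a \<Longrightarrow> a \<le> n \<Longrightarrow> (\<And>x. x \<in> set l \<Longrightarrow> 1 \<le> x \<and> x \<le> n \<and> (a + 1 < x \<or> x + 1 < a)) \<Longrightarrow> Ew p a l = 1"
  by (induction l) (auto simp: e_far)

lemma shape:
  assumes a: "1 \<le> a" "a + 1 \<le> n"
    and A: "A = (if a + 1 < n then (a+1) # M @ [a+1] else [a+1])"
    and M: "\<And>x. x \<in> set M \<Longrightarrow> a + 2 \<le> x \<and> x \<le> n"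
  shows "Ew p a A = inverse (q^2)"
    and "\<And>t. 1 \<le> t \<Longrightarrow> t < length A \<Longrightarrow> Ew p a (drop t A) = inverse q"
    and "\<And>t. 1 \<le> t \<Longrightarrow> t < length A \<Longrightarrow> Ew p a (take t A) = inverse q"
proof -
  have EM: "\<And>l. set l \<subseteq> set M \<Longrightarrow> Ew p a l = 1"
  proof (rule E_far)
    fix l x assume "set l \<subseteq> set M" "x \<in> set l"
    hence "a + 2 \<le> x \<and> x \<le> n" using M by auto
    thus "1 \<le> x \<and> x \<le> n \<and> (a + 1 < x \<or> x + 1 < a)" by auto
  qed (use a in auto)
  show "Ew p a A = inverse (q^2)"
  proof (cases "a + 1 < n")
    case True
    thus ?thesis using A EM[of M] e_adj2[of a "a+1"] a
      by (simp add: power2_eq_square inverse_mult_distrib)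
  next
    case False
    hence "a = n - 1" "a + 1 = n" using a by auto
    thus ?thesis using A e_adjn2[of a "a+1"] False by simp
  qed
  fix t assume t: "1 \<le> t" "t < length A"
  hence lt: "a + 1 < n" using A by (cases "a + 1 < n") auto
  hence A': "A = (a+1) # M @ [a+1]" using A by simp
  have "drop t A = drop (t - 1) M @ [a+1]" using t A' by (cases t) auto
  moreover have "Ew p a (drop (t - 1) M) = 1" by (rule EM) (meson in_set_dropD subsetI)
  ultimately show "Ew p a (drop t A) = inverse q" using e_adj2[of a "a+1"] a lt by simp
  have "take t A = (a+1) # take (t - 1) M" using t A' by (cases t) auto
  moreover have "Ew p a (take (t - 1) M) = 1" by (rule EM) (meson in_set_takeD subsetI)
  ultimately show "Ew p a (take t A) = inverse q" using e_adj2[of a "a+1"] a lt by simp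
qed

end



definition PP :: "(nat \<Rightarrow> nat \<Rightarrow> 'a::field) \<Rightarrow> nat \<Rightarrow> nat \<Rightarrow> nat \<Rightarrow> 'a" where
  "PP p n k m = (\<Prod>(i,j)\<in>{(i,j). k \<le> i \<and> i < j \<and> j \<le> m}. p (gidx n i) (gidx n j))"

lemma alpha_PP: "alpha p q n k m = eps q n k m * (q - 1) ^ (m - k) * PP p n k m"
  by (simp add: alpha_def PP_def)

lemma fin_pairs: "finite {(i,j). k \<le> i \<and> i < j \<and> j \<le> (m::nat)}"
  by (rule finite_subset[of _ "{..m} \<times> {..m}"]) auto

lemma PP_left:
  assumes "k \<le> m"
  shows "PP p n k (Suc m) = PP p n k m * (\<Prod>i\<in>{k..<Suc m}. p (gidx n i) (gidx n (Suc m)))"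
proof -
  have S: "{(i,j). k \<le> i \<and> i < j \<and> j \<le> Suc m} =
           {(i,j). k \<le> i \<and> i < j \<and> j \<le> m} \<union> (\<lambda>i. (i, Suc m)) ` {k..<Suc m}"
    by auto
  have "PP p n k (Suc m) = PP p n k m * (\<Prod>x\<in>(\<lambda>i. (i, Suc m)) ` {k..<Suc m}. (case x of (i,j) \<Rightarrow> p (gidx n i) (gidx n j)))"
    unfolding PP_def S by (rule prod.union_disjoint) (auto simp: fin_pairs)
  also have "\<dots> = PP p n k m * (\<Prod>i\<in>{k..<Suc m}. p (gidx n i) (gidx n (Suc m)))"
    by (subst prod.reindex) (auto simp: inj_on_def)
  finally show ?thesis .
qed

lemma PP_right:
  assumes "k < m"
  shows "PP p n k m = PP p n (Suc k) m * (\<Prod>j\<in>{Suc k..<Suc m}. p (gidx n k) (gidx n j))"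
proof -
  have S: "{(i,j). k \<le> i \<and> i < j \<and> j \<le> m} =
           {(i,j). Suc k \<le> i \<and> i < j \<and> j \<le> m} \<union> (\<lambda>j. (k, j)) ` {Suc k..<Suc m}"
    by auto
  have "PP p n k m = PP p n (Suc k) m * (\<Prod>x\<in>(\<lambda>j. (k, j)) ` {Suc k..<Suc m}. (case x of (i,j) \<Rightarrow> p (gidx n i) (gidx n j)))"
    unfolding PP_def S by (rule prod.union_disjoint) (auto simp: fin_pairs)
  also have "\<dots> = PP p n (Suc k) m * (\<Prod>j\<in>{Suc k..<Suc m}. p (gidx n k) (gidx n j))"
    by (subst prod.reindex) (auto simp: inj_on_def)
  finally show ?thesis .
qed

lemma prw_map: "prw p a (map f [k..<m]) = (\<Prod>i\<in>{k..<m}. p (f i) a)"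
  using prod.distinct_set_conv_list[of "[k..<m]" "\<lambda>i. p (f i) a"] by (simp add: prw_def comp_def)
lemma plw_map: "plw p a (map f [k..<m]) = (\<Prod>i\<in>{k..<m}. p a (f i))"
  using prod.distinct_set_conv_list[of "[k..<m]" "\<lambda>i. p a (f i)"] by (simp add: plw_def comp_def)

lemma alpha_left:
  assumes km: "k \<le> m" and heq: "eps q n k m * (inverse X - c0) = eps q n k (Suc m) * (q - 1)"
  shows "alpha p q n k m * (prw p (gidx n (Suc m)) (rev (map (gidx n) [k..<Suc m])) * (inverse X - c0))
         = alpha p q n k (Suc m)"
proof -
  let ?Q = "\<Prod>i\<in>{k..<Suc m}. p (gidx n i) (gidx n (Suc m))"
  have "alpha p q n k m * (prw p (gidx n (Suc m)) (rev (map (gidx n) [k..<Suc m])) * (inverse X - c0))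
      = (q - 1) ^ (m - k) * PP p n k m * ?Q * (eps q n k m * (inverse X - c0))"
    by (simp add: alpha_PP prw_map ac_simps)
  also have "\<dots> = (q - 1) ^ (m - k) * PP p n k m * ?Q * (eps q n k (Suc m) * (q - 1))"
    by (simp only: heq)
  also have "\<dots> = alpha p q n k (Suc m)"
    using km by (simp add: alpha_PP PP_left Suc_diff_le ac_simps)
  finally show ?thesis .
qed

lemma alpha_right:
  assumes km: "k < m" and heq: "eps q n (Suc k) m * (inverse X - c0) = eps q n k m * (q - 1)"
  shows "alpha p q n (Suc k) m * (plw p (gidx n k) (rev (map (gidx n) [Suc k..<Suc m])) * (inverse X - c0))
         = alpha p q n k m"
proof -
  let ?Q = "\<Prod>j\<in>{Suc k..<Suc m}. p (gidx n k) (gidx n j)"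
  have "alpha p q n (Suc k) m * (plw p (gidx n k) (rev (map (gidx n) [Suc k..<Suc m])) * (inverse X - c0))
      = (q - 1) ^ (m - Suc k) * PP p n (Suc k) m * ?Q * (eps q n (Suc k) m * (inverse X - c0))"
    by (simp add: alpha_PP plw_map ac_simps)
  also have "\<dots> = (q - 1) ^ (m - Suc k) * PP p n (Suc k) m * ?Q * (eps q n k m * (q - 1))"
    by (simp only: heq)
  also have "\<dots> = alpha p q n k m"
  proof -
    have "m - k = Suc (m - Suc k)" using km by simp
    thus ?thesis using km by (simp add: alpha_PP PP_right[of k m] ac_simps)
  qed
  finally show ?thesis .
qed




lemma wordA:
  assumes s: "1 \<le> s" "s < n" and m: "m = 2*n - s"
  shows "rev (map (gidx n) [Suc s..<m]) =
           (if s + 1 < n then (s+1) # rev (map (gidx n) [s+2..<m-1]) @ [s+1] else [s+1])"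
    and "\<And>x. x \<in> set (rev (map (gidx n) [s+2..<m-1])) \<Longrightarrow> s + 2 \<le> x \<and> x \<le> n"
proof -
  show "rev (map (gidx n) [Suc s..<m]) =
           (if s + 1 < n then (s+1) # rev (map (gidx n) [s+2..<m-1]) @ [s+1] else [s+1])"
  proof (cases "s + 1 < n")
    case True
    have m1: "m = Suc (m - 1)" "Suc s < m - 1" using True m by auto
    have "[Suc s..<m] = [Suc s..<m-1] @ [m-1]" using m1 by (metis less_imp_le_nat upt_Suc_append Suc_lessD)
    also have "[Suc s..<m-1] = Suc s # [s+2..<m-1]" using m1 by (simp add: upt_conv_Cons)
    finally have "[Suc s..<m] = Suc s # [s+2..<m-1] @ [m-1]" by simp
    moreover have "gidx n (m-1) = s + 1" using True m by (simp add: gidx_def)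
    moreover have "gidx n (Suc s) = s + 1" using True by (simp add: gidx_def)
    ultimately show ?thesis using True by simp
  next
    case False
    hence "s + 1 = n" "m = Suc n" using s m by auto
    thus ?thesis by (simp add: gidx_def)
  qed
  fix x assume "x \<in> set (rev (map (gidx n) [s+2..<m-1]))"
  then obtain y where "s + 2 \<le> y" "y < m - 1" "x = gidx n y" by auto
  thus "s + 2 \<le> x \<and> x \<le> n" using g_range[of "s+2" y n] m by auto
qed

context SP begin

lemma left_step:
  assumes k1: "1 \<le> k" and lt: "k + (k + Suc d) < 2*n"
    and IH: "vleft p n k d = sh_smult (alpha p q n k (k+d)) (sh_mono (rev (vword n k (k+d))))"
  shows "vleft p n k (Suc d) = sh_smult (alpha p q n k (k + Suc d)) (sh_mono (rev (vword n k (k + Suc d))))"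
proof -
  define m where "m = k + Suc d"
  define a where "a = gidx n m"
  define u where "u = rev (vword n k (k+d))"
  have mS: "m = Suc (k + d)" by (simp add: m_def)
  have uw: "u = rev (map (gidx n) [k..<m])" by (simp add: u_def vword_def m_def)
  have vwm: "rev (vword n k m) = a # u" by (simp add: vword_def u_def a_def m_def)
  have aset: "1 \<le> a \<and> a \<le> n" unfolding a_def using lt m_def by (intro g_range) auto
  have uset: "\<And>x. x \<in> set u \<Longrightarrow> 1 \<le> x \<and> x \<le> n"
    unfolding u_def set_rev using k1 lt by (intro vword_set) auto
  have nz: "\<forall>x\<in>set u. p a x \<noteq> 0 \<and> p x a \<noteq> 0" using uset aset pnz by blast
  define D where "D = Dl p 1 a u"
  have main: "(\<lambda>w. \<Sum>t\<in>{t. t \<le> length u \<and> ins t a u = w}. D t) = sh_smult (D 0) (sh_mono (a # u))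
      \<and> eps q n k (m-1) * (inverse (Ew p a u) - 1) = eps q n k m * (q - 1)"
  proof (cases "m \<le> n")
    case True
    have a: "a = m" using True by (simp add: a_def g_low)
    have u: "u = (m-1) # rev [k..<m-1]"
    proof -
      have "[k..<m] = [k..<m-1] @ [m-1]" using mS by simp
      moreover have "u = rev [k..<m]" using uw True map_g_low[of m n k] by simp
      ultimately show ?thesis by simp
    qed
    have far: "\<And>l. set l \<subseteq> {k..<m-1} \<Longrightarrow> Ew p a l = 1"
    proof (rule E_far)
      fix l x assume "set l \<subseteq> {k..<m-1}" "x \<in> set l"
      hence "k \<le> x" "x < m - 1" by auto
      thus "1 \<le> x \<and> x \<le> n \<and> (a + 1 < x \<or> x + 1 < a)" using a True k1 by auto
    qed (use aset in auto)
    have 1: "(\<lambda>w. \<Sum>t\<in>{t. t \<le> length u \<and> ins t a u = w}. D t) = sh_smult (D 0) (sh_mono (ins 0 a u))"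
    proof (rule collapse0)
      fix t assume t: "t \<le> length u" "t \<noteq> 0"
      have "drop t u = drop (t - 1) (rev [k..<m-1])" using t u by (cases t) auto
      hence "Ew p a (drop t u) = 1" using far by (metis in_set_dropD set_rev set_upt subsetI)
      thus "D t = 0" by (simp add: D_def Dl_def)
    qed simp
    show ?thesis
    proof (cases "m < n")
      case True
      have "Ew p a u = inverse q" using u a far[of "rev [k..<m-1]"] e_adj1[of "m-1" m] True mS k1 by simp
      moreover have "eps q n k (m-1) = 1" "eps q n k m = 1" using True mS unfolding eps_def phi_def by auto
      ultimately show ?thesis using 1 by (simp add: ins0)
    next
      case False
      hence mn: "m = n" using \<open>m \<le> n\<close> by simp
      have "Ew p a u = inverse (q^2)" using u a far[of "rev [k..<m-1]"] e_adjn1[of m "m-1"] mn by simp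
      moreover have "eps q n k (m-1) = 1" "eps q n k m = 1 + q" using mn mS lt m_def unfolding eps_def phi_def by auto
      ultimately show ?thesis using 1 qnz by (simp add: ins0 algebra_simps power2_eq_square)
    qed
  next
    case False
    define s where "s = 2*n - m"
    have s: "k < s" "s < n" "1 \<le> s" "m = 2*n - s" using False lt k1 by (auto simp: s_def m_def)
    have a: "a = s" using False by (simp add: a_def g_high s_def)
    define A where "A = rev (map (gidx n) [Suc s..<m])"
    define C where "C = rev [k..<s]"
    have u: "u = A @ s # C"
    proof -
      have "[k..<m] = [k..<s] @ [s..<m]" using s False upt_add_eq_append[of k s "m - s"] by simp
      also have "[s..<m] = s # [Suc s..<m]" using s False by (simp add: upt_conv_Cons)
      finally have "[k..<m] = [k..<s] @ s # [Suc s..<m]" .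
      moreover have "gidx n s = s" using s by (simp add: g_low)
      ultimately show ?thesis using s by (simp add: uw A_def C_def map_g_low)
    qed
    note wA = wordA[OF s(3) s(2) s(4)]
    have Aeq: "A = (if s + 1 < n then (s+1) # rev (map (gidx n) [s+2..<m-1]) @ [s+1] else [s+1])"
      using wA(1) A_def by simp
    have s1: "s + 1 \<le> n" using s by simp
    note sh = shape[OF s(3) s1 Aeq wA(2)]
    have EA: "Ew p s A = inverse (q^2)" using sh(1) .
    have EdA: "\<And>t. 1 \<le> t \<Longrightarrow> t < length A \<Longrightarrow> Ew p s (drop t A) = inverse q"
      using sh(2) .
    have hdA: "A \<noteq> [] \<and> hd A = s + 1" using wA(1) unfolding A_def by (simp split: if_splits)
    have C: "C = (s-1) # rev [k..<s-1]"
    proof -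
      have "s = Suc (s - 1)" "k \<le> s - 1" using s by auto
      hence "[k..<s] = [k..<s-1] @ [s-1]" by (metis upt_Suc_append)
      thus ?thesis by (simp add: C_def)
    qed
    have farC: "\<And>l. set l \<subseteq> {k..<s-1} \<Longrightarrow> Ew p s l = 1"
    proof (rule E_far)
      fix l x assume "set l \<subseteq> {k..<s-1}" "x \<in> set l"
      hence "k \<le> x" "x < s - 1" by auto
      thus "1 \<le> x \<and> x \<le> n \<and> (s + 1 < x \<or> x + 1 < s)" using s k1 by auto
    qed (use s in auto)
    have EC: "Ew p s C = inverse q"
      using C farC[of "rev [k..<s-1]"] e_adj1[of "s-1" s] s k1 by simp
    have EdC: "\<And>j. 1 \<le> j \<Longrightarrow> Ew p s (drop j C) = 1"
    proof -
      fix j :: nat assume "1 \<le> j"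
      hence "drop j C = drop (j - 1) (rev [k..<s-1])" using C by (cases j) auto
      thus "Ew p s (drop j C) = 1" using farC by (metis in_set_dropD set_rev set_upt subsetI)
    qed
    have ss: "Ew p s [s] = q^2" using e_same[of s] s by simp
    have pss: "p s s = q" using pii s by simp
    have 1: "(\<lambda>w. \<Sum>t\<in>{t. t \<le> length u \<and> ins t a u = w}. D t) = sh_smult (D 0) (sh_mono (a # u))"
      unfolding a
    proof (rule collapseL[OF u])
      show "A \<noteq> []" "hd A \<noteq> s" using hdA by auto
      fix t assume t: "t \<le> length u" "t \<noteq> 0" "t \<noteq> length A" "t \<noteq> Suc (length A)"
      show "D t = 0"
      proof (cases "t < length A")
        case True
        hence "drop t u = drop t A @ s # C" using u by simp
        hence "Ew p s (drop t u) = 1" using EdA[of t] True t EC ss qnz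
          by (simp add: power2_eq_square field_simps)
        thus ?thesis by (simp add: D_def Dl_def a)
      next
        case False
        hence "drop t u = drop (t - Suc (length A)) C" using u t by (simp add: drop_Cons')
        hence "Ew p s (drop t u) = 1" using EdC[of "t - Suc (length A)"] False t by simp
        thus ?thesis by (simp add: D_def Dl_def a)
      qed
    next
      have "drop (length A) u = s # C" "drop (Suc (length A)) u = C" using u by auto
      thus "D (length A) + D (Suc (length A)) = 0"
        using qnz by (simp add: D_def Dl_def a EC pss ss) (simp add: field_simps power2_eq_square)
    qed
    have "Ew p a u = inverse q" using u a EA EC ss qnz by (simp add: power2_eq_square)
    moreover have "eps q n k (m-1) = 1 + q" "eps q n k m = 1 + q"
      using False lt m_def s unfolding eps_def phi_def by auto
    ultimately show ?thesis using 1 by simp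
  qed
  have "vleft p n k (Suc d) = sh_sub (sh_mult p (sh_smult (alpha p q n k (k+d)) (sh_mono u)) (sh_mono [a]))
        (sh_smult (1 * prw p a u) (sh_mult p (sh_mono [a]) (sh_smult (alpha p q n k (k+d)) (sh_mono u))))"
    by (simp add: sh_br_def IH shx_def u_def a_def m_def pw_right1)
  also have "\<dots> = sh_smult (alpha p q n k (k+d)) (\<lambda>w. \<Sum>t\<in>{t. t \<le> length u \<and> ins t a u = w}. D t)"
    by (simp only: br_left Dl_eq[OF nz] D_def)
  also have "\<dots> = sh_smult (alpha p q n k (k+d) * D 0) (sh_mono (a # u))"
    using main[THEN conjunct1] by (simp add: sh_smult_def mult.assoc)
  also have "alpha p q n k (k+d) * D 0 = alpha p q n k m"
  proof -
    have "alpha p q n k (k+d) * D 0 = alpha p q n k (k+d) *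
       (prw p (gidx n (Suc (k+d))) (rev (map (gidx n) [k..<Suc (k+d)])) * (inverse (Ew p a u) - 1))"
      by (simp add: D_def Dl_def uw a_def mS)
    also have "\<dots> = alpha p q n k (Suc (k+d))"
      by (rule alpha_left) (use main mS in simp_all)
    finally show ?thesis by (simp add: mS)
  qed
  finally show ?thesis using vwm by (simp add: m_def)
qed

end



lemma alpha_kk: "alpha p q n k k = 1"
proof -
  have E: "{(i,j). k \<le> i \<and> i < j \<and> j \<le> k} = {}" by auto
  have "eps q n k k = 1" unfolding eps_def phi_def by auto
  thus ?thesis unfolding alpha_def E by simp
qed

context SP begin

lemma left_all: "1 \<le> k \<Longrightarrow> k + (k + d) < 2*n \<Longrightarrow>
  vleft p n k d = sh_smult (alpha p q n k (k+d)) (sh_mono (rev (vword n k (k+d))))"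
proof (induction d)
  case 0
  thus ?case by (simp add: alpha_kk shx_def vword_def sh_smult_def)
next
  case (Suc d)
  thus ?case using left_step[of k d] by simp
qed

lemma right_step:
  assumes k1: "1 \<le> k" and km: "k < m" and m2: "m < 2*n" and big: "2*n < k + m"
    and IH: "vright p n m d = sh_smult (alpha p q n (Suc k) m) (sh_mono (rev (vword n (Suc k) m)))"
    and d: "Suc d = m - k"
  shows "vright p n m (Suc d) = sh_smult (alpha p q n k m) (sh_mono (rev (vword n k m)))"
proof -
  define b where "b = gidx n k"
  define u where "u = rev (vword n (Suc k) m)"
  have uw: "u = rev (map (gidx n) [Suc k..<Suc m])" by (simp add: u_def vword_def)
  have vwm: "rev (vword n k m) = u @ [b]"
    using km by (simp add: vword_def u_def b_def upt_conv_Cons)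
  have bset: "1 \<le> b \<and> b \<le> n" unfolding b_def using k1 km m2 by (intro g_range) auto
  have uset: "\<And>x. x \<in> set u \<Longrightarrow> 1 \<le> x \<and> x \<le> n"
    unfolding u_def set_rev using k1 m2 by (intro vword_set) auto
  have nz: "\<forall>x\<in>set u. p b x \<noteq> 0 \<and> p x b \<noteq> 0" using uset bset pnz by blast
  define D where "D = Dr p 1 b u"
  define s where "s = 2*n - m"
  have s1: "1 \<le> s" "s < k" using m2 big by (auto simp: s_def)
  have main: "(\<lambda>w. \<Sum>t\<in>{t. t \<le> length u \<and> ins t b u = w}. D t) = sh_smult (D (length u)) (sh_mono (u @ [b]))
      \<and> eps q n (Suc k) m * (inverse (Ew p b u) - 1) = eps q n k m * (q - 1)"
  proof (cases "n \<le> k")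
    case True
    have b: "b = 2*n - k" using True by (cases "k = n") (auto simp: b_def g_high g_low)
    have u: "u = [s..<b]"
      using uw map_g_high_rev[of n "Suc k" "Suc m"] True km m2 b by (simp add: s_def rev_map)
    have sb: "s < b" using b km m2 s_def by simp
    have u2: "u = [s..<b-1] @ [b-1]"
    proof -
      have "b = Suc (b - 1)" "s \<le> b - 1" using sb by auto
      thus ?thesis using u by (metis upt_Suc_append)
    qed
    have far: "\<And>l. set l \<subseteq> {s..<b-1} \<Longrightarrow> Ew p b l = 1"
    proof (rule E_far)
      fix l x assume "set l \<subseteq> {s..<b-1}" "x \<in> set l"
      hence "s \<le> x" "x < b - 1" by auto
      thus "1 \<le> x \<and> x \<le> n \<and> (b + 1 < x \<or> x + 1 < b)" using s1 bset by auto
    qed (use bset in auto)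
    have 1: "(\<lambda>w. \<Sum>t\<in>{t. t \<le> length u \<and> ins t b u = w}. D t) = sh_smult (D (length u)) (sh_mono (ins (length u) b u))"
    proof (rule collapse0)
      fix t assume t: "t \<le> length u" "t \<noteq> length u"
      have "take t u = take t [s..<b-1]" using t u2 by simp
      hence "Ew p b (take t u) = 1" using far by (metis in_set_takeD set_upt subsetI)
      thus "D t = 0" by (simp add: D_def Dr_def)
    qed simp
    show ?thesis
    proof (cases "n < k")
      case True
      have bn: "b < n" "1 \<le> b - 1" using b True km m2 sb s1 by auto
      have "Ew p b u = inverse q" using u2 far[of "[s..<b-1]"] e_adj1[of "b-1" b] bn by simp
      moreover have "eps q n (Suc k) m = 1" "eps q n k m = 1" using True km unfolding eps_def phi_def by auto
      ultimately show ?thesis using 1 by (simp add: insr)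
    next
      case False
      hence kn: "k = n" using \<open>n \<le> k\<close> by simp
      hence bn: "b = n" using b by simp
      have "Ew p b u = inverse (q^2)" using u2 far[of "[s..<b-1]"] e_adjn1[of b "b-1"] bn by simp
      moreover have "eps q n (Suc k) m = 1" "eps q n k m = 1 + q" using kn km unfolding eps_def phi_def by auto
      ultimately show ?thesis using 1 qnz by (simp add: insr algebra_simps power2_eq_square)
    qed
  next
    case False
    hence kn: "k < n" by simp
    have b: "b = k" using kn by (simp add: b_def g_low)
    define A where "A = [s..<k]"
    define M where "M = [k+2..<n] @ rev [k+2..<Suc n]"
    define R where "R = [Suc k..<n] @ rev [Suc k..<Suc n]"
    have u: "u = A @ k # R"
    proof -
      have "[Suc k..<Suc m] = [Suc k..<Suc n] @ [Suc n..<Suc m]"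
        using upt_add_eq_append[of "Suc k" "Suc n" "m - n"] kn km big by simp
      hence "u = rev (map (gidx n) [Suc n..<Suc m]) @ rev [Suc k..<Suc n]"
        using uw map_g_low[of "Suc n" n "Suc k"] by simp
      also have "rev (map (gidx n) [Suc n..<Suc m]) = [s..<n]"
        using map_g_high_rev[of n "Suc n" "Suc m"] m2 km big kn by (simp add: s_def rev_map)
      also have "[s..<n] = [s..<k] @ [k..<n]" using upt_add_eq_append[of s k "n - k"] s1 kn by simp
      also have "[k..<n] = k # [Suc k..<n]" using kn by (simp add: upt_conv_Cons)
      finally show ?thesis by (simp add: A_def R_def)
    qed
    have Req: "R = (if k + 1 < n then (k+1) # M @ [k+1] else [k+1])"
    proof (cases "k + 1 < n")
      case True
      have "[Suc k..<n] = Suc k # [k+2..<n]" using True by (simp add: upt_conv_Cons)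
      moreover have "[Suc k..<Suc n] = Suc k # [k+2..<Suc n]" using True by (simp add: upt_conv_Cons)
      ultimately show ?thesis using True by (simp add: R_def M_def)
    next
      case False
      hence "Suc k = n" using kn by simp
      thus ?thesis by (simp add: R_def)
    qed
    have Mset: "\<And>x. x \<in> set M \<Longrightarrow> k + 2 \<le> x \<and> x \<le> n" by (auto simp: M_def)
    have k1n: "k + 1 \<le> n" using kn by simp
    have ER1: "Ew p k R = inverse (q^2)" by (rule shape(1)[OF k1 k1n Req]) (rule Mset)
    have ER3: "\<And>t. 1 \<le> t \<Longrightarrow> t < length R \<Longrightarrow> Ew p k (take t R) = inverse q"
      by (rule shape(3)[OF k1 k1n Req]) (auto dest: Mset)
    have Rne: "R \<noteq> [] \<and> last R = k + 1" using Req by simp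
    have A2: "A = [s..<k-1] @ [k-1]"
    proof -
      have "k = Suc (k - 1)" "s \<le> k - 1" using s1 by auto
      thus ?thesis unfolding A_def by (metis upt_Suc_append)
    qed
    have far: "\<And>l. set l \<subseteq> {s..<k-1} \<Longrightarrow> Ew p k l = 1"
    proof (rule E_far)
      fix l x assume "set l \<subseteq> {s..<k-1}" "x \<in> set l"
      hence "s \<le> x" "x < k - 1" by auto
      thus "1 \<le> x \<and> x \<le> n \<and> (k + 1 < x \<or> x + 1 < k)" using s1 kn by auto
    qed (use k1 kn in auto)
    have EA: "Ew p k A = inverse q" using A2 far[of "[s..<k-1]"] e_adj1[of "k-1" k] kn s1 by simp
    have kk: "Ew p k [k] = q^2" using e_same[of k] k1 kn by simp
    have pkk: "p k k = q" using pii k1 kn by simp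
    have 1: "(\<lambda>w. \<Sum>t\<in>{t. t \<le> length u \<and> ins t b u = w}. D t) = sh_smult (D (length u)) (sh_mono (u @ [b]))"
      unfolding b
    proof (rule collapseR[OF u])
      show "R \<noteq> []" "last R \<noteq> k" using Rne by auto
      fix t assume t: "t \<le> length u" "t \<noteq> length u" "t \<noteq> length A" "t \<noteq> Suc (length A)"
      show "D t = 0"
      proof (cases "t < length A")
        case True
        hence "take t u = [s..<s+t]" using u by (simp add: A_def take_upt)
        moreover have "Ew p k [s..<s+t] = 1" by (rule far) (use True in \<open>auto simp: A_def\<close>)
        ultimately show ?thesis by (simp add: D_def Dr_def b)
      next
        case False
        define j where "j = t - Suc (length A)"
        have j: "1 \<le> j" "j < length R" using False t u by (auto simp: j_def)
        have "take t u = A @ k # take j R" using u False t by (simp add: take_Cons' j_def)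
        hence "Ew p k (take t u) = 1" using ER3[OF j] EA kk qnz
          by (simp add: power2_eq_square field_simps)
        thus ?thesis by (simp add: D_def Dr_def b)
      qed
    next
      have "take (length A) u = A" "take (Suc (length A)) u = A @ [k]" using u by auto
      thus "D (length A) + D (Suc (length A)) = 0"
        using qnz by (simp add: D_def Dr_def b EA pkk kk) (simp add: field_simps power2_eq_square)
    qed
    have "Ew p b u = inverse q" using u b EA kk ER1 qnz by (simp add: power2_eq_square field_simps)
    moreover have "eps q n (Suc k) m = 1 + q" "eps q n k m = 1 + q"
      using kn km big m2 unfolding eps_def phi_def by auto
    ultimately show ?thesis using 1 by simp
  qed
  have "vright p n m (Suc d) = sh_sub (sh_mult p (sh_mono [b]) (sh_smult (alpha p q n (Suc k) m) (sh_mono u)))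
        (sh_smult (1 * plw p b u) (sh_mult p (sh_smult (alpha p q n (Suc k) m) (sh_mono u)) (sh_mono [b])))"
  proof -
    have e1: "m - Suc d = k" "m - d = Suc k" using d by auto
    show ?thesis by (simp add: sh_br_def IH[unfolded e1(2)[symmetric]] shx_def u_def b_def e1 pw_left1)
  qed
  also have "\<dots> = sh_smult (alpha p q n (Suc k) m) (\<lambda>w. \<Sum>t\<in>{t. t \<le> length u \<and> ins t b u = w}. D t)"
    by (simp only: br_right Dr_eq[OF nz] D_def)
  also have "\<dots> = sh_smult (alpha p q n (Suc k) m * D (length u)) (sh_mono (u @ [b]))"
    using main[THEN conjunct1] by (simp add: sh_smult_def mult.assoc)
  also have "alpha p q n (Suc k) m * D (length u) = alpha p q n k m"
  proof -
    have "alpha p q n (Suc k) m * D (length u) = alpha p q n (Suc k) m *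
       (plw p (gidx n k) (rev (map (gidx n) [Suc k..<Suc m])) * (inverse (Ew p b u) - 1))"
      by (simp add: D_def Dr_def uw b_def)
    also have "\<dots> = alpha p q n k m"
      by (rule alpha_right) (use main km in simp_all)
    finally show ?thesis .
  qed
  finally show ?thesis using vwm by simp
qed

end



context SP begin

lemma right_all: "m < 2*n \<Longrightarrow> d < m \<Longrightarrow> (d = 0 \<or> 2*n < (m - d) + m) \<Longrightarrow>
  vright p n m d = sh_smult (alpha p q n (m-d) m) (sh_mono (rev (vword n (m-d) m)))"
proof (induction d)
  case 0
  thus ?case by (simp add: alpha_kk shx_def vword_def sh_smult_def)
next
  case (Suc d)
  define k where "k = m - Suc d"
  have k: "1 \<le> k" "k < m" "2*n < k + m" "Suc k = m - d" "Suc d = m - k"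
    using Suc.prems by (auto simp: k_def)
  have IH: "vright p n m d = sh_smult (alpha p q n (Suc k) m) (sh_mono (rev (vword n (Suc k) m)))"
    using Suc.IH Suc.prems k by (cases d) auto
  show ?case using right_step[OF k(1) k(2) Suc.prems(1) k(3) IH k(5)] by (simp add: k_def)
qed

lemma phi_case:
  assumes k1: "1 \<le> k" and kn: "k < n" and m: "m = 2*n - k"
  shows "vbr p q n k m = sh_smult (alpha p q n k m) (sh_mono (rev (vword n k m)))"
proof -
  define a where "a = gidx n m"
  define u where "u = rev (vword n k (m-1))"
  have a: "a = k" using kn m by (simp add: a_def g_high)
  have mS: "m = Suc (m - 1)" using m kn by simp
  have uw: "u = rev (map (gidx n) [k..<m])"
  proof -
    have "Suc (m - 1) = m" using mS by simp
    thus ?thesis by (simp only: u_def vword_def)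
  qed
  have vwm: "rev (vword n k m) = a # u"
  proof -
    have "[k..<Suc m] = [k..<m] @ [m]" using m kn by simp
    thus ?thesis by (simp add: vword_def uw a_def)
  qed
  have aset: "1 \<le> a \<and> a \<le> n" using a k1 kn by simp
  have uset: "\<And>x. x \<in> set u \<Longrightarrow> 1 \<le> x \<and> x \<le> n"
    unfolding u_def set_rev using k1 m kn by (intro vword_set) auto
  have nz: "\<forall>x\<in>set u. p a x \<noteq> 0 \<and> p x a \<noteq> 0" using uset aset pnz by blast
  define D where "D = Dl p (inverse q) a u"
  define A where "A = rev (map (gidx n) [Suc k..<m])"
  have u: "u = A @ k # []"
  proof -
    have "[k..<m] = k # [Suc k..<m]" using m kn by (simp add: upt_conv_Cons)
    thus ?thesis using kn by (simp add: uw A_def g_low)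
  qed
  note wA = wordA[OF k1 kn m]
  have Aeq: "A = (if k + 1 < n then (k+1) # rev (map (gidx n) [k+2..<m-1]) @ [k+1] else [k+1])"
    using wA(1) A_def by simp
  have k1n: "k + 1 \<le> n" using kn by simp
  note sh = shape[OF k1 k1n Aeq wA(2)]
  have EA: "Ew p k A = inverse (q^2)" using sh(1) .
  have EdA: "\<And>t. 1 \<le> t \<Longrightarrow> t < length A \<Longrightarrow> Ew p k (drop t A) = inverse q"
    using sh(2) .
  have hdA: "A \<noteq> [] \<and> hd A = k + 1" using Aeq by (simp split: if_splits)
  have kk: "Ew p k [k] = q^2" using e_same[of k] k1 kn by simp
  have pkk: "p k k = q" using pii k1 kn by simp
  have 1: "(\<lambda>w. \<Sum>t\<in>{t. t \<le> length u \<and> ins t a u = w}. D t) = sh_smult (D 0) (sh_mono (a # u))"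
    unfolding a
  proof (rule collapseL[OF u])
    show "A \<noteq> []" "hd A \<noteq> k" using hdA by auto
    fix t assume t: "t \<le> length u" "t \<noteq> 0" "t \<noteq> length A" "t \<noteq> Suc (length A)"
    hence tA: "t < length A" using u by simp
    hence "drop t u = drop t A @ [k]" using u by simp
    hence "Ew p k (drop t u) = q" using EdA[of t] tA t kk qnz
      by (simp add: power2_eq_square field_simps)
    thus "D t = 0" by (simp add: D_def Dl_def a)
  next
    have "drop (length A) u = [k]" "drop (Suc (length A)) u = []" using u by auto
    thus "D (length A) + D (Suc (length A)) = 0"
      using qnz by (simp add: D_def Dl_def a pkk kk) (simp add: field_simps power2_eq_square)
  qed
  have Eu: "Ew p a u = 1" using qnz by (simp add: u a EA pkk power2_eq_square field_simps)
  have eps1: "eps q n k (m-1) = 1 + q" "eps q n k m = 1 + inverse q"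
    using kn m unfolding eps_def phi_def by auto
  have vl: "vleft p n k (m - 1 - k) = sh_smult (alpha p q n k (m-1)) (sh_mono u)"
  proof -
    have c: "k + (k + (m - 1 - k)) < 2*n" "k + (m - 1 - k) = m - 1" using k1 kn m by auto
    show ?thesis using left_all[OF k1 c(1)] unfolding c(2) u_def .
  qed
  have ne: "k \<noteq> m" "\<not> m < phi n k" "\<not> phi n k < m" using m kn by (auto simp: phi_def)
  have "vbr p q n k m = sh_sub (sh_mult p (sh_smult (alpha p q n k (m-1)) (sh_mono u)) (sh_mono [a]))
        (sh_smult (inverse q * prw p a u) (sh_mult p (sh_mono [a]) (sh_smult (alpha p q n k (m-1)) (sh_mono u))))"
  proof -
    have pwe: "pw p (vword n k (m - 1)) [a] = prw p a u"
      by (simp add: pw_right1 u_def a_def)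
    show ?thesis unfolding vbr_def by (simp only: ne if_False pwe vl shx_def a_def[symmetric])
  qed
  also have "\<dots> = sh_smult (alpha p q n k (m-1)) (\<lambda>w. \<Sum>t\<in>{t. t \<le> length u \<and> ins t a u = w}. D t)"
    by (simp only: br_left Dl_eq[OF nz] D_def)
  also have "\<dots> = sh_smult (alpha p q n k (m-1) * D 0) (sh_mono (a # u))"
    using 1 by (simp add: sh_smult_def mult.assoc)
  also have "alpha p q n k (m-1) * D 0 = alpha p q n k m"
  proof -
    have sm: "Suc (m - 1) = m" using mS by simp
    have "alpha p q n k (m-1) * D 0 = alpha p q n k (m-1) *
       (prw p (gidx n (Suc (m-1))) (rev (map (gidx n) [k..<Suc (m-1)])) * (inverse (Ew p a u) - inverse q))"
      unfolding sm D_def Dl_def drop_0 a_def uw ..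
    also have "\<dots> = alpha p q n k (Suc (m-1))"
    proof (rule alpha_left)
      show "k \<le> m - 1" using m kn by simp
      show "eps q n k (m - 1) * (inverse (Ew p a u) - inverse q) = eps q n k (Suc (m - 1)) * (q - 1)"
        using qnz unfolding sm eps1 Eu by (simp add: field_simps)
    qed
    finally show ?thesis unfolding sm .
  qed
  finally show ?thesis using vwm by simp
qed

lemma main_thm:
  assumes km: "1 \<le> k" "k \<le> m" "m < 2 * n"
  shows "vbr p q n k m = sh_smult (alpha p q n k m) (sh_mono (rev (vword n k m)))"
proof -
  consider "k = m" | "k \<noteq> m" "m < phi n k" | "k \<noteq> m" "\<not> m < phi n k" "phi n k < m"
    | "k \<noteq> m" "\<not> m < phi n k" "\<not> phi n k < m" by blast
  thus ?thesis
  proof cases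
    case 1
    have "vbr p q n k m = shx n k" unfolding vbr_def using 1 by simp
    thus ?thesis using 1 by (simp add: alpha_kk shx_def vword_def sh_smult_def)
  next
    case 2
    have v: "vbr p q n k m = vleft p n k (m - k)" unfolding vbr_def using 2 by (simp only: if_True if_False)
    have c: "k + (k + (m - k)) < 2*n" "k + (m - k) = m" using 2 km by (auto simp: phi_def)
    show ?thesis using left_all[OF km(1) c(1)] unfolding v c(2) .
  next
    case 3
    have v: "vbr p q n k m = vright p n m (m - k)" unfolding vbr_def using 3 by (simp only: if_True if_False)
    have c: "m - k < m" "m - k = 0 \<or> 2*n < (m - (m - k)) + m" "m - (m - k) = k"
      using 3 km by (auto simp: phi_def)
    show ?thesis using right_all[OF km(3) c(1) c(2)] unfolding v c(3) .
  next
    case 4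
    have c: "m = 2*n - k" "k < n" using 4 km by (auto simp: phi_def)
    show ?thesis by (rule phi_case[OF km(1) c(2) c(1)])
  qed
qed

end


theorem proposition4p2:
  fixes p :: "nat \<Rightarrow> nat \<Rightarrow> 'a::field" and q :: 'a and n k m :: nat
  assumes n2: "n \<ge> 2"
    and pnz: "\<And>i j. 1 \<le> i \<Longrightarrow> i \<le> n \<Longrightarrow> 1 \<le> j \<Longrightarrow> j \<le> n \<Longrightarrow> p i j \<noteq> 0"
    and qnz: "q \<noteq> 0" and q3: "q ^ 3 \<noteq> 1" and qm1: "q \<noteq> -1"
    and pii: "\<And>i. 1 \<le> i \<Longrightarrow> i < n \<Longrightarrow> p i i = q"
    and pnn: "p n n = q ^ 2"
    and padj: "\<And>i. 1 < i \<Longrightarrow> i < n \<Longrightarrow> p i (i - 1) * p (i - 1) i = inverse q"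
    and plast: "p (n - 1) n * p n (n - 1) = inverse (q ^ 2)"
    and pfar: "\<And>i j. 1 \<le> i \<Longrightarrow> i + 1 < j \<Longrightarrow> j \<le> n \<Longrightarrow> p i j * p j i = 1"
    and km: "1 \<le> k" "k \<le> m" "m < 2 * n"
  shows "vbr p q n k m = sh_smult (alpha p q n k m) (sh_mono (rev (vword n k m)))"
proof -
  have "SP p q n" unfolding SP_def using n2 pnz qnz q3 qm1 pii pnn padj plast pfar by blast
  thus ?thesis using SP.main_thm[OF _ km] by blast
qed

end
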